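(* Let $s\le k$ be positive integers and let $\tau_1,\dots,\tau_k\in(0,1]$ be distinct abscissae. Let $\omega_1,\dots,\omega_k$ be the weights of the interpolatory quadrature formula on $[0,1]$ based at these abscissae, i.e. $\omega_j=\int_0^1\ell_j(x)\,\mathrm{d}x$, where $\ell_j$ is the $j$th Lagrange polynomial of degree $k-1$ on the nodes $\{\tau_i\}$. Assume that this quadrature formula is exact for all polynomials of degree $2s-1$. Let $P_j(t)=\sqrt{2j-1}\,\hat P_{j-1}(t)$, $j\ge1$, where $\hat P_{j-1}$ is the shifted Legendre polynomial of degree $j-1$ on $[0,1]$ (so that $\int_0^1P_iP_j\,\mathrm{d}t=\delta_{ij}$). Define $\Omega=\mathrm{diag}(\omega_1,\dots,\omega_k)$ and the $k\times s$ matrices $\mathcal I_s,\mathcal P_s$ with entries $(\mathcal I_s)_{ij}=\int_0^{\tau_i}P_j(x)\,\mathrm{d}x$ and $(\mathcal P_s)_{ij}=P_j(\tau_i)$, and let $$A=\mathcal I_s\,\mathcal P_s^T\,\Omega\in\mathbb R^{k\times k}.$$ Then the nonzero eigenvalues of $A$ coincide with the eigenvalues of the Butcher matrix of the $s$-stage Gauss-Legendre Runge-Kutta method of order $2s$.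
   Context: The Butcher matrix of the $s$-stage Gauss-Legendre method of order $2s$ is the $s\times s$ matrix with entries $\int_0^{c_i}L_j(x)\,\mathrm{d}x$, where $c_1,\dots,c_s$ are the zeros of the shifted Legendre polynomial of degree $s$ on $[0,1]$ and $L_j$ is the $j$th Lagrange polynomial of degree $s-1$ on these nodes. The matrix $A$ is the Butcher matrix of the Runge-Kutta method called HBVM$(k,s)$ (Hamiltonian Boundary Value Method with $k$ steps and degree $s$) with abscissae $\tau_i$ and weights $\omega_i$. *)

theory Defs
  imports "HOL-Analysis.Analysis" "Jordan_Normal_Form.Char_Poly"
begin

definition shifted_legendre :: "nat \<Rightarrow> real poly" where
  "shifted_legendre n =
     (\<Sum>k\<le>n. monom ((-1)^(n+k) * real (n choose k) * real ((n+k) choose k)) k)"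

text \<open>Normalised Legendre basis, 0-based: column j is sqrt(2j+1) times the
  shifted Legendre polynomial of degree j (the paper's P_(j+1)).\<close>
definition leg_P :: "nat \<Rightarrow> real \<Rightarrow> real" where
  "leg_P j t = sqrt (2 * real j + 1) * poly (shifted_legendre j) t"

definition lagrange_basis :: "(nat \<Rightarrow> real) \<Rightarrow> nat \<Rightarrow> nat \<Rightarrow> real \<Rightarrow> real" where
  "lagrange_basis x n j t = (\<Prod>i\<in>{..<n} - {j}. (t - x i) / (x j - x i))"

definition quad_weight :: "(nat \<Rightarrow> real) \<Rightarrow> nat \<Rightarrow> nat \<Rightarrow> real" where
  "quad_weight tau k j = integral {0..1} (lagrange_basis tau k j)"

definition gauss_nodes :: "nat \<Rightarrow> real list" where
  "gauss_nodes s = sorted_list_of_set {x. poly (shifted_legendre s) x = 0}"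

definition gauss_butcher :: "nat \<Rightarrow> real mat" where
  "gauss_butcher s =
     mat s s (\<lambda>(i,j). integral {0..gauss_nodes s ! i}
                        (lagrange_basis (\<lambda>m. gauss_nodes s ! m) s j))"

definition I_mat :: "(nat \<Rightarrow> real) \<Rightarrow> nat \<Rightarrow> nat \<Rightarrow> real mat" where
  "I_mat tau k s = mat k s (\<lambda>(i,j). integral {0..tau i} (leg_P j))"

definition P_mat :: "(nat \<Rightarrow> real) \<Rightarrow> nat \<Rightarrow> nat \<Rightarrow> real mat" where
  "P_mat tau k s = mat k s (\<lambda>(i,j). leg_P j (tau i))"

definition Omega_mat :: "(nat \<Rightarrow> real) \<Rightarrow> nat \<Rightarrow> real mat" where
  "Omega_mat tau k = mat k k (\<lambda>(i,j). if i = j then quad_weight tau k i else 0)"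

definition hbvm_matrix :: "(nat \<Rightarrow> real) \<Rightarrow> nat \<Rightarrow> nat \<Rightarrow> real mat" where
  "hbvm_matrix tau k s = I_mat tau k s * transpose_mat (P_mat tau k s) * Omega_mat tau k"

end

theory Submission
  imports Defs
begin


lemma pderiv_sum': "pderiv (sum f A) = (\<Sum>x\<in>A. pderiv (f x))"
  using higher_pderiv_sum[of 1 f A] by simp

definition pint :: "real poly \<Rightarrow> real poly" where
  "pint p = (\<Sum>i\<le>degree p. monom (coeff p i / real (Suc i)) (Suc i))"

lemma coeff_pint: "coeff (pint p) i = (if i = 0 then 0 else coeff p (i - 1) / real i)"
proof (cases i)
  case 0 then show ?thesis by (simp add: pint_def coeff_sum coeff_monom)
next
  case (Suc m)
  have "coeff (pint p) i = (\<Sum>k\<le>degree p. if k = m then coeff p k / real (Suc k) else 0)"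
    by (simp add: pint_def coeff_sum coeff_monom Suc)
  also have "\<dots> = (if m \<le> degree p then coeff p m / real (Suc m) else 0)"
    by (simp add: sum.delta')
  also have "\<dots> = coeff p m / real (Suc m)"
    using coeff_eq_0[of p m] by auto
  finally show ?thesis by (simp add: Suc)
qed

lemma pderiv_pint[simp]: "pderiv (pint p) = p"
  by (rule poly_eqI) (simp add: coeff_pderiv coeff_pint)

lemma poly_pint_0[simp]: "poly (pint p) 0 = 0"
  by (simp add: pint_def poly_sum poly_monom)

lemma degree_pint: "degree (pint p) \<le> degree p + 1"
  unfolding pint_def by (rule degree_sum_le) (auto intro: order.trans[OF degree_monom_le])

lemma pint_add: "pint (p + q) = pint p + pint q"
  by (rule poly_eqI) (simp add: coeff_pint add_divide_distrib)

lemma pint_smult: "pint (Polynomial.smult c p) = Polynomial.smult c (pint p)"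
  by (rule poly_eqI) (simp add: coeff_pint)

lemma pint_0[simp]: "pint 0 = 0"
  by (rule poly_eqI) (simp add: coeff_pint)

lemma pint_sum: "pint (sum f A) = (\<Sum>x\<in>A. pint (f x))"
  by (induction A rule: infinite_finite_induct) (auto simp: pint_add)

lemma integral_poly_antideriv:
  fixes a b :: real
  assumes "a \<le> b" "pderiv P = p"
  shows "integral {a..b} (poly p) = poly P b - poly P a"
proof -
  have "(poly p has_integral poly P b - poly P a) {a..b}"
  proof (rule fundamental_theorem_of_calculus)
    show "a \<le> b" by (rule assms(1))
  next
    fix x assume "x \<in> {a..b}"
    have "(poly P has_real_derivative poly p x) (at x)"
      using poly_DERIV[of P x] assms(2) by simp
    then show "(poly P has_vector_derivative poly p x) (at x within {a..b})"
      using has_real_derivative_iff_has_vector_derivative has_vector_derivative_at_within by blast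
  qed
  then show ?thesis by (rule integral_unique)
qed

lemma integral_poly_pint: "0 \<le> t \<Longrightarrow> integral {0..t} (poly p) = poly (pint p) t"
  using integral_poly_antideriv[of 0 t "pint p" p] by simp

definition J :: "real poly \<Rightarrow> real" where
  "J p = integral {0..1} (poly p)"

lemma J_pint: "J p = poly (pint p) 1"
  unfolding J_def by (simp add: integral_poly_pint)

lemma J_antideriv: "pderiv P = p \<Longrightarrow> J p = poly P 1 - poly P 0"
  unfolding J_def by (rule integral_poly_antideriv) auto

lemma J_add: "J (p + q) = J p + J q"
  by (simp add: J_pint pint_add)
lemma J_diff: "J (p - q) = J p - J q"
  using J_add[of "p - q" q] by simp
lemma J_minus: "J (- p) = - J p"
  using J_add[of "- p" p] by (simp add: J_pint)
lemma J_smult: "J (Polynomial.smult c p) = c * J p"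
  by (simp add: J_pint pint_smult)
lemma J_0[simp]: "J 0 = 0"
  by (simp add: J_pint)
lemma J_sum: "J (sum f A) = (\<Sum>x\<in>A. J (f x))"
  by (simp add: J_pint pint_sum poly_sum)

lemma J_parts: "J (pderiv f * g) = poly (f * g) 1 - poly (f * g) 0 - J (f * pderiv g)"
proof -
  have "J (pderiv f * g) = J (pderiv (f * g) - f * pderiv g)"
    by (simp add: pderiv_mult algebra_simps)
  also have "\<dots> = J (pderiv (f*g)) - J (f * pderiv g)" by (rule J_diff)
  also have "J (pderiv (f*g)) = poly (f * g) 1 - poly (f * g) 0"
    by (rule J_antideriv) simp
  finally show ?thesis .
qed

lemma J_monom: "J (monom c a) = c / real (Suc a)"
proof -
  have "J (monom c a) = poly (monom (c / real (Suc a)) (Suc a)) 1 - poly (monom (c / real (Suc a)) (Suc a)) 0"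
    by (rule J_antideriv) (simp add: pderiv_monom)
  then show ?thesis by (simp add: poly_monom)
qed



definition q0 :: "real poly" where "q0 = [:0,1:] * [:-1,1:]"
definition R :: "nat \<Rightarrow> real poly" where "R n = q0 ^ n"

lemma R_alt: "R n = monom 1 n * [:-1,1:] ^ n"
  by (simp only: R_def q0_def power_mult_distrib) (simp add: monom_altdef)

lemma coeff_higher_pderiv:
  fixes p :: "real poly"
  shows "coeff ((pderiv ^^ j) p) i = (fact (i + j) / fact i) * coeff p (i + j)"
proof (induction j arbitrary: i)
  case 0 then show ?case by (simp add: fact_nonzero)
next
  case (Suc j)
  have "coeff ((pderiv ^^ Suc j) p) i = real (Suc i) * coeff ((pderiv ^^ j) p) (Suc i)"
    by (simp add: coeff_pderiv)
  also have "\<dots> = real (Suc i) * (fact (Suc i + j) / fact (Suc i)) * coeff p (Suc i + j)"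
    using Suc by simp
  also have "\<dots> = (fact (i + Suc j) / fact i) * coeff p (i + Suc j)"
  proof -
    have e: "Suc i + j = i + Suc j" by simp
    have "real (Suc i) * (fact (i + Suc j) / fact (Suc i)) = fact (i + Suc j) / (fact i :: real)"
      unfolding fact_Suc[of i] by (simp del: fact_Suc)
    then show ?thesis by (simp only: e)
  qed
  finally show ?case .
qed

lemma coeff_R: "coeff (R n) (i + n) = (if i \<le> n then real (n choose i) * (-1) ^ (n - i) else 0)"
proof -
  have "coeff (R n) (i + n) = coeff ([:-1,1:] ^ n) i"
    by (simp add: R_alt coeff_monom_mult)
  also have "\<dots> = (if i \<le> n then real (n choose i) * (-1) ^ (n - i) else 0)"
  proof (cases "i \<le> n")
    case True then show ?thesis by (simp add: coeff_linear_poly_power)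
  next
    case False
    have "degree ([:-1,1::real:] ^ n) = n" by (rule degree_linear_power)
    then show ?thesis using False by (simp add: coeff_eq_0)
  qed
  finally show ?thesis .
qed

lemma coeff_SL: "coeff (shifted_legendre n) i =
   (if i \<le> n then (-1)^(n+i) * real (n choose i) * real ((n+i) choose i) else 0)"
  by (simp add: shifted_legendre_def coeff_sum coeff_monom sum.delta')

lemma degree_SL: "degree (shifted_legendre n) \<le> n"
  unfolding shifted_legendre_def by (rule degree_sum_le) (auto intro: order.trans[OF degree_monom_le])

lemma lc_SL: "coeff (shifted_legendre n) n = real ((2*n) choose n)"
  by (simp add: coeff_SL mult_2)

lemma SL_nonzero: "shifted_legendre n \<noteq> 0"
proof
  assume "shifted_legendre n = 0"
  then have "coeff (shifted_legendre n) n = 0" by simp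
  then show False by (simp add: lc_SL)
qed

lemma SL_rodrigues: "shifted_legendre n = Polynomial.smult (1 / fact n) ((pderiv ^^ n) (R n))"
proof (rule poly_eqI)
  fix i
  show "coeff (shifted_legendre n) i = coeff (Polynomial.smult (1 / fact n) ((pderiv ^^ n) (R n))) i"
  proof (cases "i \<le> n")
    case True
    have b: "real ((i+n) choose i) = fact (i + n) / (fact i * fact n)"
      by (simp add: binomial_fact add.commute)
    have s: "(-1::real)^(i+n) = (-1)^(n-i)"
    proof -
      have "n + i = (n - i) + 2 * i" using True by simp
      then have "(-1::real)^(i+n) = (-1)^((n - i) + 2 * i)" by (simp only: add.commute)
      also have "\<dots> = (-1)^(n-i)" by (simp only: power_add power_mult) simp
      finally show ?thesis .
    qed
    show ?thesis using True
      by (simp add: coeff_SL coeff_higher_pderiv coeff_R add.commute[of n i] b s mult_ac)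
  next
    case False
    then show ?thesis by (simp add: coeff_SL coeff_higher_pderiv coeff_R)
  qed
qed



lemma R_factor: "j \<le> n \<Longrightarrow> \<exists>S. (pderiv ^^ j) (R n) = q0 ^ (n - j) * S"
proof (induction j)
  case 0 then show ?case by (auto simp: R_def intro: exI[of _ 1])
next
  case (Suc j)
  then obtain S where S: "(pderiv ^^ j) (R n) = q0 ^ (n - j) * S" by auto
  obtain b where b: "n - j = Suc b" using Suc.prems by (metis Suc_diff_le Suc_le_lessD less_imp_Suc_add add_Suc Suc_le_eq diff_Suc_Suc)
  have nb: "n - Suc j = b" using b by simp
  have "(pderiv ^^ Suc j) (R n) = pderiv (q0 ^ Suc b * S)" by (simp add: S b)
  also have "\<dots> = q0 ^ Suc b * pderiv S + S * (Polynomial.smult (of_nat (Suc b)) (q0 ^ b) * pderiv q0)"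
    by (simp only: pderiv_mult pderiv_power_Suc)
  also have "\<dots> = q0 ^ b * (q0 * pderiv S + S * Polynomial.smult (of_nat (Suc b)) (pderiv q0))"
    by (simp only: power_Suc) (simp add: algebra_simps)
  finally show ?case using nb by auto
qed

lemma R_vanish:
  assumes "j < n"
  shows "poly ((pderiv ^^ j) (R n)) 0 = 0" "poly ((pderiv ^^ j) (R n)) 1 = 0"
proof -
  obtain S where S: "(pderiv ^^ j) (R n) = q0 ^ (n - j) * S" using R_factor assms by fastforce
  have "n - j \<noteq> 0" using assms by simp
  then show "poly ((pderiv ^^ j) (R n)) 0 = 0" "poly ((pderiv ^^ j) (R n)) 1 = 0"
    by (simp_all add: S q0_def)
qed

lemma R_ortho:
  "a \<le> n \<Longrightarrow> (\<forall>i\<ge>a. coeff g i = 0) \<Longrightarrow> J (g * (pderiv ^^ a) (R n)) = 0"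
proof (induction a arbitrary: g)
  case 0
  then have "g = 0" by (intro poly_eqI) simp
  then show ?case by simp
next
  case (Suc a)
  define f where "f = (pderiv ^^ a) (R n)"
  have "J (g * (pderiv ^^ Suc a) (R n)) = J (pderiv f * g)"
    by (simp add: f_def mult.commute)
  also have "\<dots> = poly (f * g) 1 - poly (f * g) 0 - J (f * pderiv g)" by (rule J_parts)
  also have "\<dots> = - J (f * pderiv g)"
    using R_vanish[of a n] Suc.prems by (simp add: f_def)
  also have "J (f * pderiv g) = J (pderiv g * (pderiv ^^ a) (R n))"
    by (simp add: f_def mult.commute)
  also have "\<dots> = 0"
    using Suc.prems by (intro Suc.IH) (auto simp: coeff_pderiv)
  finally show ?case by simp
qed

lemma R_norm:
  "m \<le> n \<Longrightarrow> J (monom c m * (pderiv ^^ m) (R n)) = (-1)^m * fact m * c * J (R n)"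
proof (induction m arbitrary: c)
  case 0 then show ?case by (simp add: monom_altdef J_smult)
next
  case (Suc m)
  define f where "f = (pderiv ^^ m) (R n)"
  have "J (monom c (Suc m) * (pderiv ^^ Suc m) (R n)) = J (pderiv f * monom c (Suc m))"
    by (simp add: f_def mult.commute)
  also have "\<dots> = poly (f * monom c (Suc m)) 1 - poly (f * monom c (Suc m)) 0 - J (f * pderiv (monom c (Suc m)))"
    by (rule J_parts)
  also have "\<dots> = - J (f * pderiv (monom c (Suc m)))"
    using R_vanish[of m n] Suc.prems by (simp add: f_def)
  also have "J (f * pderiv (monom c (Suc m))) = J (monom (real (Suc m) * c) m * (pderiv ^^ m) (R n))"
    by (simp add: f_def mult.commute pderiv_monom)
  also have "\<dots> = (-1)^m * fact m * (real (Suc m) * c) * J (R n)"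
    using Suc.prems by (intro Suc.IH) simp
  finally show ?case by (simp add: fact_Suc)
qed



lemma beta_J: "J (monom 1 a * [:-1,1:] ^ b) = (-1)^b * fact a * fact b / fact (a + b + 1)"
proof (induction b arbitrary: a)
  case 0 then show ?case by (simp add: J_monom fact_Suc)
next
  case (Suc b)
  define F where "F = monom (1 / real (Suc a)) (Suc a)"
  define G where "G = [:-1,1::real:] ^ Suc b"
  have F: "pderiv F = monom 1 a" by (simp add: F_def pderiv_monom)
  have "J (monom 1 a * [:-1,1:] ^ Suc b) = J (pderiv F * G)" by (simp add: F G_def)
  also have "\<dots> = poly (F * G) 1 - poly (F * G) 0 - J (F * pderiv G)" by (rule J_parts)
  also have "\<dots> = - J (F * pderiv G)" by (simp add: F_def G_def poly_monom)
  also have "F * pderiv G = Polynomial.smult (real (Suc b) / real (Suc a)) (monom 1 (Suc a) * [:-1,1:] ^ b)"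
  proof -
    have dG: "pderiv G = Polynomial.smult (real (Suc b)) ([:-1,1:]^b)"
      by (simp only: G_def pderiv_power_Suc) (simp add: pderiv_pCons)
    have Fm: "F = Polynomial.smult (1 / real (Suc a)) (monom 1 (Suc a))"
      by (simp add: F_def smult_monom)
    show ?thesis by (simp only: Fm dG mult_smult_left mult_smult_right smult_smult) simp
  qed
  also have "J \<dots> = (real (Suc b) / real (Suc a)) * ((-1)^b * fact (Suc a) * fact b / fact (Suc a + b + 1))"
    by (simp add: J_smult Suc.IH)
  also have "(real (Suc b) / real (Suc a)) * ((-1)^b * fact (Suc a) * fact b / fact (Suc a + b + 1)) = (-1)^b * fact a * fact (Suc b) / fact (a + Suc b + 1)"
  proof -
    have e: "Suc a + b + 1 = a + Suc b + 1" by simp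
    have fa: "fact (Suc a) = real (Suc a) * fact a" by simp
    have fb: "fact (Suc b) = real (Suc b) * fact b" by simp
    show ?thesis unfolding e fa fb by (simp add: field_simps del: of_nat_Suc fact_Suc)
  qed
  finally show ?case by (simp del: fact_Suc)
qed

lemma SL_ortho: "(\<forall>i\<ge>n. coeff g i = 0) \<Longrightarrow> J (g * shifted_legendre n) = 0"
  by (simp add: SL_rodrigues mult_smult_right J_smult R_ortho)

lemma SL_norm_arith:
  fixes fn s a b :: real
  assumes "fn \<noteq> 0" "s * s = 1"
  shows "(1 / fn) * (s * fn * (a / (fn * fn)) * (s * fn * fn / b)) = a / b"
proof -
  have "(1 / fn) * (s * fn * (a / (fn * fn)) * (s * fn * fn / b)) = (s * s) * (a / b) * (fn / fn) * (fn * fn / (fn * fn))"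
    by (simp add: field_simps)
  also have "\<dots> = a / b" using assms by simp
  finally show ?thesis .
qed

lemma SL_norm: "J (shifted_legendre n * shifted_legendre n) = 1 / (2 * real n + 1)"
proof -
  define L where "L = shifted_legendre n"
  define DR where "DR = (pderiv ^^ n) (R n)"
  define low where "low = L - monom (coeff L n) n"
  have L: "L = Polynomial.smult (1 / fact n) DR" by (simp add: L_def DR_def SL_rodrigues)
  have lowc: "\<forall>i\<ge>n. coeff low i = 0"
    using degree_SL[of n] by (auto simp: low_def L_def coeff_monom intro: coeff_eq_0)
  have "J (L * L) = (1 / fact n) * J (L * DR)"
    by (subst (2) L) (simp add: mult_smult_right J_smult)
  also have "L * DR = monom (coeff L n) n * DR + low * DR" by (simp add: low_def algebra_simps)
  also have "J \<dots> = J (monom (coeff L n) n * DR)" using R_ortho[of n n low] lowc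
    by (simp add: J_add DR_def)
  also have "\<dots> = (-1)^n * fact n * coeff L n * J (R n)" by (simp add: DR_def R_norm)
  also have "J (R n) = (-1)^n * fact n * fact n / fact (2 * n + 1)"
    by (simp add: R_alt beta_J mult_2 del: fact_Suc)
  also have "coeff L n = fact (2 * n) / (fact n * fact n)"
    by (simp add: L_def lc_SL binomial_fact mult_2)
  also have "(1 / fact n) * ((-1) ^ n * fact n * (fact (2 * n) / (fact n * fact n)) *
      ((-1) ^ n * fact n * fact n / fact (2 * n + 1))) = fact (2 * n) / (fact (2 * n + 1) :: real)"
    by (rule SL_norm_arith) (simp_all add: power_mult_distrib[symmetric])
  also have "fact (2 * n + 1) = (2 * real n + 1) * (fact (2 * n) :: real)"
    by (simp only: Suc_eq_plus1[symmetric] fact_Suc) simp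
  also have "fact (2 * n) / ((2 * real n + 1) * fact (2 * n)) = 1 / (2 * real n + 1)"
    by simp
  finally show ?thesis by (simp add: L_def)
qed



lemma rolle_count:
  fixes p :: "real poly"
  shows "finite Z \<Longrightarrow> card Z = Suc m \<Longrightarrow> Z \<subseteq> {a..b} \<Longrightarrow> (\<forall>z\<in>Z. poly p z = 0) \<Longrightarrow>
    \<exists>W. finite W \<and> card W = m \<and> W \<subseteq> {a<..<b} \<and> (\<forall>w\<in>W. poly (pderiv p) w = 0)"
proof (induction m arbitrary: Z b)
  case 0 then show ?case by (intro exI[of _ "{}"]) auto
next
  case (Suc m)
  define z1 where "z1 = Max Z"
  define Z' where "Z' = Z - {z1}"
  have ne: "Z \<noteq> {}" using Suc.prems by auto
  have z1Z: "z1 \<in> Z" using Suc.prems ne by (simp add: z1_def)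
  have cZ': "card Z' = Suc m" using Suc.prems z1Z by (simp add: Z'_def)
  have fZ': "finite Z'" using Suc.prems by (simp add: Z'_def)
  have neZ': "Z' \<noteq> {}" using cZ' by auto
  define z2 where "z2 = Max Z'"
  have z2Z': "z2 \<in> Z'" using fZ' neZ' by (simp add: z2_def)
  have z2lt: "z2 < z1"
  proof -
    have "z2 \<le> z1" using z2Z' Suc.prems by (simp add: Z'_def z1_def)
    moreover have "z2 \<noteq> z1" using z2Z' by (simp add: Z'_def)
    ultimately show ?thesis by simp
  qed
  have Z'sub: "Z' \<subseteq> {a..z2}"
  proof
    fix z assume "z \<in> Z'"
    then show "z \<in> {a..z2}" using Suc.prems fZ' by (auto simp: z2_def Z'_def)
  qed
  obtain W' where W': "finite W'" "card W' = m" "W' \<subseteq> {a<..<z2}" "\<forall>w\<in>W'. poly (pderiv p) w = 0"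
    using Suc.IH[OF fZ' cZ' Z'sub] Suc.prems by (auto simp: Z'_def)
  have p12: "poly p z2 = poly p z1" using Suc.prems z1Z z2Z' by (auto simp: Z'_def)
  obtain w where w: "z2 < w" "w < z1" "(poly p has_real_derivative 0) (at w)"
    using Rolle[OF z2lt p12] by (auto simp: continuous_on_poly real_differentiable_def intro: poly_DERIV)
  have pw: "poly (pderiv p) w = 0" using DERIV_unique[OF w(3) poly_DERIV[of p w]] by simp
  have "w \<notin> W'" using W'(3) w(1) by auto
  moreover have "a \<le> z2" using Z'sub z2Z' by auto
  moreover have "z1 \<le> b" using Suc.prems z1Z by auto
  ultimately show ?case using W' w pw
    by (intro exI[of _ "insert w W'"]) auto
qed

lemma D_roots:
  "j \<le> n \<Longrightarrow> \<exists>Z. finite Z \<and> card Z = j \<and> Z \<subseteq> {0<..<1} \<and> (\<forall>z\<in>Z. poly ((pderiv ^^ j) (R n)) z = 0)"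
proof (induction j)
  case 0 then show ?case by (intro exI[of _ "{}"]) auto
next
  case (Suc j)
  then obtain Z where Z: "finite Z" "card Z = j" "Z \<subseteq> {0<..<1}" "\<forall>z\<in>Z. poly ((pderiv ^^ j) (R n)) z = 0"
    by auto
  define Z' where "Z' = insert 0 (insert (1::real) Z)"
  have "0 \<notin> Z" "1 \<notin> Z" using Z(3) by auto
  then have c: "card Z' = Suc (Suc j)" using Z by (simp add: Z'_def)
  have roots: "\<forall>z\<in>Z'. poly ((pderiv ^^ j) (R n)) z = 0"
    using Z(4) R_vanish[of j n] Suc.prems by (auto simp: Z'_def)
  have "Z' \<subseteq> {0..1}" using Z(3) by (auto simp: Z'_def)
  from rolle_count[OF _ c this roots] Z(1)
  show ?case by (auto simp: Z'_def)
qed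

definition SLroots :: "nat \<Rightarrow> real set" where
  "SLroots s = {x. poly (shifted_legendre s) x = 0}"

lemma SL_roots: "finite (SLroots s) \<and> card (SLroots s) = s \<and> SLroots s \<subseteq> {0<..<1}"
proof -
  obtain Z where Z: "finite Z" "card Z = s" "Z \<subseteq> {0<..<1}" "\<forall>z\<in>Z. poly ((pderiv ^^ s) (R s)) z = 0"
    using D_roots[of s s] by auto
  have sub: "Z \<subseteq> SLroots s" using Z(4) by (auto simp: SLroots_def SL_rodrigues)
  have fin: "finite (SLroots s)" unfolding SLroots_def by (rule poly_roots_finite[OF SL_nonzero])
  have "card (SLroots s) \<le> s"
    unfolding SLroots_def using card_poly_roots_bound[OF SL_nonzero[of s]] degree_SL[of s] by linarith
  then have "card Z = card (SLroots s)" using card_mono[OF fin sub] Z(2) by simp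
  then have "Z = SLroots s" using card_subset_eq[OF fin sub] by simp
  then show ?thesis using Z fin by simp
qed

definition gnode :: "nat \<Rightarrow> nat \<Rightarrow> real" where
  "gnode s i = gauss_nodes s ! i"

lemma gauss_nodes_props:
  "length (gauss_nodes s) = s" "distinct (gauss_nodes s)" "set (gauss_nodes s) = SLroots s"
  using SL_roots[of s]
  by (auto simp: gauss_nodes_def SLroots_def[symmetric])

lemma gnode_inj: "inj_on (gnode s) {..<s}"
  using gauss_nodes_props[of s] by (auto simp: inj_on_def gnode_def nth_eq_iff_index_eq)

lemma gnode_image: "gnode s ` {..<s} = SLroots s"
  using gauss_nodes_props[of s] by (auto simp: gnode_def set_conv_nth image_def)

lemma gnode_in: "i < s \<Longrightarrow> gnode s i \<in> {0<..<1}"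
proof -
  assume "i < s"
  then have "gnode s i \<in> SLroots s" using gnode_image[of s] by blast
  then show ?thesis using SL_roots[of s] by blast
qed

lemma gnode_root: "i < s \<Longrightarrow> poly (shifted_legendre s) (gnode s i) = 0"
  using gnode_image[of s] by (auto simp: SLroots_def)



definition lagpoly :: "(nat \<Rightarrow> real) \<Rightarrow> nat \<Rightarrow> nat \<Rightarrow> real poly" where
  "lagpoly x n j = (\<Prod>i\<in>{..<n} - {j}. Polynomial.smult (1 / (x j - x i)) [:- x i, 1:])"

lemma lin_aux: "poly (Polynomial.smult c [:- a, 1:]) t = c * (t - a :: real)"
  by (simp add: algebra_simps)

lemma lagrange_poly: "lagrange_basis x n j = poly (lagpoly x n j)"
proof
  fix t
  show "lagrange_basis x n j t = poly (lagpoly x n j) t"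
    unfolding lagrange_basis_def lagpoly_def poly_prod
  proof (rule prod.cong)
    fix i
    show "(t - x i) / (x j - x i) = poly (Polynomial.smult (1 / (x j - x i)) [:- x i, 1:]) t"
      by (simp only: lin_aux) simp
  qed simp
qed

lemma degree_lagpoly: "j < n \<Longrightarrow> degree (lagpoly x n j) \<le> n - 1"
proof -
  assume j: "j < n"
  have "degree (lagpoly x n j) \<le> sum (degree \<circ> (\<lambda>i. Polynomial.smult (1 / (x j - x i)) [:- x i, 1:])) ({..<n} - {j})"
    unfolding lagpoly_def by (rule degree_prod_sum_le) simp
  also have "\<dots> \<le> sum (\<lambda>i. 1) ({..<n} - {j})"
    by (rule sum_mono) (simp add: degree_smult_le order.trans[OF degree_smult_le])
  also have "\<dots> = n - 1" using j by simp
  finally show ?thesis .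
qed

lemma lagpoly_node:
  assumes "inj_on x {..<n}" "j < n" "l < n"
  shows "poly (lagpoly x n j) (x l) = (if l = j then 1 else 0)"
proof (cases "l = j")
  case True
  have "poly (lagpoly x n j) (x l) = (\<Prod>i\<in>{..<n} - {j}. 1)"
    unfolding lagpoly_def poly_prod
  proof (rule prod.cong)
    fix i assume i: "i \<in> {..<n} - {j}"
    then have "x j \<noteq> x i" using assms inj_onD[of x "{..<n}" j i] by auto
    then have "x j - x i \<noteq> 0" by simp
    then show "poly (Polynomial.smult (1 / (x j - x i)) [:- x i, 1:]) (x l) = 1"
      using True by (simp only: lin_aux) simp
  qed simp
  then show ?thesis using True by simp
next
  case False
  have "poly (lagpoly x n j) (x l) = (\<Prod>i\<in>{..<n} - {j}. poly (Polynomial.smult (1 / (x j - x i)) [:- x i, 1:]) (x l))"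
    unfolding lagpoly_def poly_prod ..
  also have "\<dots> = 0"
    by (rule prod_zero) (use False assms in auto)
  finally show ?thesis using False by simp
qed

lemma interp:
  fixes r :: "real poly"
  assumes inj: "inj_on x {..<n}" and dr: "degree r < n"
  shows "r = (\<Sum>j<n. Polynomial.smult (poly r (x j)) (lagpoly x n j))"
proof (rule poly_eqI_degree[of "x ` {..<n}"])
  fix t assume "t \<in> x ` {..<n}"
  then obtain l where l: "l < n" "t = x l" by auto
  have "poly (\<Sum>j<n. Polynomial.smult (poly r (x j)) (lagpoly x n j)) (x l) =
        (\<Sum>j<n. poly r (x j) * (if l = j then 1 else 0))"
    by (simp add: poly_sum lagpoly_node[OF inj _ l(1)])
  also have "\<dots> = (\<Sum>j<n. if l = j then poly r (x j) else 0)"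
    by (rule sum.cong) auto
  also have "\<dots> = poly r (x l)" using l(1) by simp
  finally show "poly r t = poly (\<Sum>j<n. Polynomial.smult (poly r (x j)) (lagpoly x n j)) t"
    using l by simp
next
  have c: "card (x ` {..<n}) = n" using card_image[OF inj] by simp
  show "degree r < card (x ` {..<n})" using c dr by simp
  have "degree (\<Sum>j<n. Polynomial.smult (poly r (x j)) (lagpoly x n j)) \<le> n - 1"
  proof (rule degree_sum_le)
    fix j assume "j \<in> {..<n}"
    then have "degree (lagpoly x n j) \<le> n - 1" by (intro degree_lagpoly) simp
    then show "degree (Polynomial.smult (poly r (x j)) (lagpoly x n j)) \<le> n - 1"
      using degree_smult_le order.trans by blast
  qed simp
  then show "degree (\<Sum>j<n. Polynomial.smult (poly r (x j)) (lagpoly x n j)) < card (x ` {..<n})"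
    using c dr by linarith
qed

lemma quad_weight_J: "quad_weight x n j = J (lagpoly x n j)"
  by (simp add: quad_weight_def J_def lagrange_poly)

lemma interp_exact:
  fixes r :: "real poly"
  assumes "inj_on x {..<n}" "degree r < n"
  shows "J r = (\<Sum>j<n. quad_weight x n j * poly r (x j))"
proof -
  have "J r = J (\<Sum>j<n. Polynomial.smult (poly r (x j)) (lagpoly x n j))"
    using interp[OF assms] by simp
  also have "\<dots> = (\<Sum>j<n. quad_weight x n j * poly r (x j))"
    by (simp add: J_sum J_smult quad_weight_J mult.commute)
  finally show ?thesis .
qed

lemma degree_SL_eq: "degree (shifted_legendre s) = s"
  using degree_SL[of s] le_degree[of "shifted_legendre s" s] by (simp add: lc_SL)

lemma gauss_exact:
  fixes p :: "real poly"
  assumes s: "0 < s" and dp: "degree p \<le> 2 * s - 1"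
  shows "(\<Sum>j<s. quad_weight (gnode s) s j * poly p (gnode s j)) = integral {0..1} (poly p)"
proof -
  define L where "L = shifted_legendre s"
  define q where "q = p div L"
  define r where "r = p mod L"
  have L0: "L \<noteq> 0" by (simp add: L_def SL_nonzero)
  have dL: "degree L = s" by (simp add: L_def degree_SL_eq)
  have pqr: "p = q * L + r" by (simp add: q_def r_def div_mult_mod_eq)
  have dr: "degree r < s"
    using degree_mod_less'[OF L0, of p] dL s by (cases "r = 0") (auto simp: r_def)
  have qc: "\<forall>i\<ge>s. coeff q i = 0"
  proof (cases "q = 0")
    case True then show ?thesis by simp
  next
    case False
    have "degree (q * L) = degree q + s" using degree_mult_eq[OF False L0] dL by simp
    moreover have "q * L = p - r" using pqr by simp
    moreover have "degree (p - r) \<le> max (degree p) (degree r)" by (rule degree_diff_le_max)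
    ultimately have "degree q + s \<le> 2 * s - 1" using dp dr s by auto
    then have "degree q < s" using s by linarith
    then show ?thesis by (auto intro: coeff_eq_0)
  qed
  have "integral {0..1} (poly p) = J p" by (simp add: J_def)
  also have "\<dots> = J (q * L) + J r" using pqr by (simp add: J_add)
  also have "J (q * L) = 0" using SL_ortho[OF qc] by (simp add: L_def)
  also have "J r = (\<Sum>j<s. quad_weight (gnode s) s j * poly r (gnode s j))"
    using interp_exact[OF gnode_inj dr] .
  also have "\<dots> = (\<Sum>j<s. quad_weight (gnode s) s j * poly p (gnode s j))"
    by (rule sum.cong) (simp_all add: pqr L_def gnode_root)
  finally show ?thesis by simp
qed



definition legpoly :: "nat \<Rightarrow> real poly" where
  "legpoly j = Polynomial.smult (sqrt (2 * real j + 1)) (shifted_legendre j)"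

lemma leg_P_poly: "leg_P j = poly (legpoly j)"
  by (rule ext) (simp add: leg_P_def legpoly_def)

lemma degree_legpoly: "degree (legpoly j) \<le> j"
  unfolding legpoly_def using degree_SL[of j] degree_smult_le order.trans by blast

lemma legpoly_ortho_lt: "i < j \<Longrightarrow> J (legpoly i * legpoly j) = 0"
proof -
  assume ij: "i < j"
  have c: "\<forall>k\<ge>j. coeff (shifted_legendre i) k = 0"
    using degree_SL[of i] ij by (auto intro: coeff_eq_0)
  show ?thesis using SL_ortho[OF c]
    by (simp add: legpoly_def mult_smult_left mult_smult_right J_smult)
qed

lemma legpoly_orthonormal: "J (legpoly i * legpoly j) = (if i = j then 1 else 0)"
proof (cases "i = j")
  case True
  have "J (legpoly i * legpoly i) = sqrt (2 * real i + 1) * sqrt (2 * real i + 1) * (1 / (2 * real i + 1))"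
    by (simp add: legpoly_def mult_smult_left mult_smult_right J_smult SL_norm)
  also have "\<dots> = 1" by simp
  finally show ?thesis using True by simp
next
  case False
  then show ?thesis using legpoly_ortho_lt[of i j] legpoly_ortho_lt[of j i]
    by (cases "i < j") (auto simp: mult.commute)
qed

definition M_mat :: "nat \<Rightarrow> real mat" where
  "M_mat s = mat s s (\<lambda>(i,j). J (legpoly i * pint (legpoly j)))"

definition Y_mat :: "(nat \<Rightarrow> real) \<Rightarrow> nat \<Rightarrow> nat \<Rightarrow> real mat" where
  "Y_mat tau k s = mat s k (\<lambda>(i,l). leg_P i (tau l) * quad_weight tau k l)"

lemma carriers:
  "I_mat tau k s \<in> carrier_mat k s" "P_mat tau k s \<in> carrier_mat k s"
  "Omega_mat tau k \<in> carrier_mat k k" "Y_mat tau k s \<in> carrier_mat s k"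
  "M_mat s \<in> carrier_mat s s"
  by (simp_all add: I_mat_def P_mat_def Omega_mat_def Y_mat_def M_mat_def)

lemma PtO: "transpose_mat (P_mat tau k s) * Omega_mat tau k = Y_mat tau k s"
proof (rule eq_matI)
  fix i l assume i: "i < dim_row (Y_mat tau k s)" and l: "l < dim_col (Y_mat tau k s)"
  then have i': "i < s" and l': "l < k" by (simp_all add: Y_mat_def)
  have "(transpose_mat (P_mat tau k s) * Omega_mat tau k) $$ (i, l) =
        (\<Sum>m\<in>{0..<k}. leg_P i (tau m) * (if m = l then quad_weight tau k m else 0))"
    using i' l' by (simp add: P_mat_def Omega_mat_def scalar_prod_def)
  also have "\<dots> = (\<Sum>m\<in>{0..<k}. if m = l then leg_P i (tau m) * quad_weight tau k m else 0)"
    by (rule sum.cong) auto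
  also have "\<dots> = leg_P i (tau l) * quad_weight tau k l" using l' by simp
  finally show "(transpose_mat (P_mat tau k s) * Omega_mat tau k) $$ (i, l) = Y_mat tau k s $$ (i, l)"
    using i' l' by (simp add: Y_mat_def)
qed (simp_all add: Y_mat_def P_mat_def Omega_mat_def)

lemma hbvm_XY: "hbvm_matrix tau k s = I_mat tau k s * Y_mat tau k s"
  unfolding hbvm_matrix_def PtO[symmetric]
  by (rule assoc_mult_mat[OF carriers(1)]) (auto simp: P_mat_def Omega_mat_def)

lemma YX:
  assumes pos: "\<And>i. i < k \<Longrightarrow> 0 \<le> tau i"
    and ex: "\<And>p :: real poly. degree p \<le> 2 * s - 1 \<Longrightarrow>
           (\<Sum>j<k. quad_weight tau k j * poly p (tau j)) = integral {0..1} (poly p)"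
  shows "Y_mat tau k s * I_mat tau k s = M_mat s"
proof (rule eq_matI)
  fix i j assume i: "i < dim_row (M_mat s)" and j: "j < dim_col (M_mat s)"
  then have i': "i < s" and j': "j < s" by (simp_all add: M_mat_def)
  have "(Y_mat tau k s * I_mat tau k s) $$ (i, j) =
        (\<Sum>l\<in>{0..<k}. leg_P i (tau l) * quad_weight tau k l * integral {0..tau l} (leg_P j))"
    using i' j' by (simp add: Y_mat_def I_mat_def scalar_prod_def)
  also have "\<dots> = (\<Sum>l<k. quad_weight tau k l * poly (legpoly i * pint (legpoly j)) (tau l))"
    by (rule sum.cong) (auto simp: leg_P_poly integral_poly_pint pos)
  also have "\<dots> = integral {0..1} (poly (legpoly i * pint (legpoly j)))"
  proof (rule ex)
    have "degree (legpoly i * pint (legpoly j)) \<le> degree (legpoly i) + degree (pint (legpoly j))"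
      by (rule degree_mult_le)
    also have "\<dots> \<le> i + (j + 1)" using degree_legpoly[of i] degree_legpoly[of j] degree_pint[of "legpoly j"]
      by linarith
    finally show "degree (legpoly i * pint (legpoly j)) \<le> 2 * s - 1" using i' j' by linarith
  qed
  finally show "(Y_mat tau k s * I_mat tau k s) $$ (i, j) = M_mat s $$ (i, j)"
    using i' j' by (simp add: M_mat_def J_def)
qed (simp_all add: Y_mat_def I_mat_def M_mat_def)

lemma eig_swap:
  fixes X Y :: "complex mat"
  assumes X: "X \<in> carrier_mat k s" and Y: "Y \<in> carrier_mat s k" and z: "z \<noteq> 0"
    and e: "eigenvalue (X * Y) z"
  shows "eigenvalue (Y * X) z"
proof -
  from e obtain v where v: "v \<in> carrier_vec k" "v \<noteq> 0\<^sub>v k" "(X * Y) *\<^sub>v v = z \<cdot>\<^sub>v v"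
    using X Y by (auto simp: eigenvalue_def eigenvector_def)
  define w where "w = Y *\<^sub>v v"
  have w: "w \<in> carrier_vec s" using Y v by (simp add: w_def)
  have Xw: "X *\<^sub>v w = z \<cdot>\<^sub>v v" using v X Y by (simp add: w_def)
  have "w \<noteq> 0\<^sub>v s"
  proof
    assume "w = 0\<^sub>v s"
    then have "X *\<^sub>v w = 0\<^sub>v k" using X by (intro eq_vecI) (auto simp: scalar_prod_def)
    then have "z \<cdot>\<^sub>v v = 0\<^sub>v k" using Xw by simp
    then have "v = 0\<^sub>v k"
    proof -
      assume h: "z \<cdot>\<^sub>v v = 0\<^sub>v k"
      show "v = 0\<^sub>v k"
      proof (rule eq_vecI)
        fix i assume "i < dim_vec (0\<^sub>v k)"
        then have "(z \<cdot>\<^sub>v v) $ i = 0" using h by simp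
        then show "v $ i = 0\<^sub>v k $ i" using z \<open>i < dim_vec (0\<^sub>v k)\<close> v(1) by simp
      qed (use v(1) in simp)
    qed
    then show False using v by simp
  qed
  moreover have "(Y * X) *\<^sub>v w = z \<cdot>\<^sub>v w"
  proof -
    have "(Y * X) *\<^sub>v w = Y *\<^sub>v (X *\<^sub>v w)" using X Y w by simp
    also have "\<dots> = Y *\<^sub>v (z \<cdot>\<^sub>v v)" by (simp add: Xw)
    also have "\<dots> = z \<cdot>\<^sub>v (Y *\<^sub>v v)" by (rule mult_mat_vec[OF Y v(1)])
    finally show ?thesis by (simp add: w_def)
  qed
  ultimately show ?thesis using w X Y by (auto simp: eigenvalue_def eigenvector_def)
qed

lemma hbvm_eigs:
  assumes pos: "\<And>i. i < k \<Longrightarrow> 0 \<le> tau i"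
    and ex: "\<And>p :: real poly. degree p \<le> 2 * s - 1 \<Longrightarrow>
           (\<Sum>j<k. quad_weight tau k j * poly p (tau j)) = integral {0..1} (poly p)"
  shows "{z. eigenvalue (map_mat complex_of_real (hbvm_matrix tau k s)) z \<and> z \<noteq> 0}
       = {z. eigenvalue (map_mat complex_of_real (M_mat s)) z \<and> z \<noteq> 0}"
proof -
  let ?X = "map_mat complex_of_real (I_mat tau k s)"
  let ?Y = "map_mat complex_of_real (Y_mat tau k s)"
  have X: "?X \<in> carrier_mat k s" and Y: "?Y \<in> carrier_mat s k" using carriers by auto
  have h1: "map_mat complex_of_real (hbvm_matrix tau k s) = ?X * ?Y"
    unfolding hbvm_XY by (rule of_real_hom.mat_hom_mult[OF carriers(1) carriers(4)])
  have yx: "Y_mat tau k s * I_mat tau k s = M_mat s" by (rule YX[OF pos ex])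
  have h2: "map_mat complex_of_real (M_mat s) = ?Y * ?X"
    unfolding yx[symmetric] by (rule of_real_hom.mat_hom_mult[OF carriers(4) carriers(1)])
  show ?thesis unfolding h1 h2 using eig_swap[OF X Y] eig_swap[OF Y X] by blast
qed



lemma gnode_fun: "(\<lambda>m. gauss_nodes s ! m) = gnode s"
  by (rule ext) (simp add: gnode_def)

lemma gauss_YP:
  assumes s: "0 < s"
  shows "Y_mat (gnode s) s s * P_mat (gnode s) s s = 1\<^sub>m s"
proof (rule eq_matI)
  fix a b assume a: "a < dim_row (1\<^sub>m s)" and b: "b < dim_col (1\<^sub>m s)"
  then have a': "a < s" and b': "b < s" by simp_all
  have "(Y_mat (gnode s) s s * P_mat (gnode s) s s) $$ (a, b) =
      (\<Sum>l\<in>{0..<s}. leg_P a (gnode s l) * quad_weight (gnode s) s l * leg_P b (gnode s l))"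
    using a' b' by (simp add: Y_mat_def P_mat_def scalar_prod_def)
  also have "\<dots> = (\<Sum>l<s. quad_weight (gnode s) s l * poly (legpoly a * legpoly b) (gnode s l))"
    by (rule sum.cong) (auto simp: leg_P_poly)
  also have "\<dots> = integral {0..1} (poly (legpoly a * legpoly b))"
  proof (rule gauss_exact[OF s])
    have "degree (legpoly a * legpoly b) \<le> degree (legpoly a) + degree (legpoly b)"
      by (rule degree_mult_le)
    then show "degree (legpoly a * legpoly b) \<le> 2 * s - 1"
      using degree_legpoly[of a] degree_legpoly[of b] a' b' by linarith
  qed
  also have "\<dots> = (if a = b then 1 else 0)"
    using legpoly_orthonormal[of a b] by (simp add: J_def)
  finally show "(Y_mat (gnode s) s s * P_mat (gnode s) s s) $$ (a, b) = 1\<^sub>m s $$ (a, b)"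
    using a' b' by simp
qed (simp_all add: Y_mat_def P_mat_def)

lemma gauss_PY:
  assumes s: "0 < s" and j: "j < s" and l: "l < s"
  shows "(\<Sum>m<s. leg_P m (gnode s j) * leg_P m (gnode s l)) * quad_weight (gnode s) s l
         = (if j = l then 1 else 0)"
proof -
  have "P_mat (gnode s) s s * Y_mat (gnode s) s s = 1\<^sub>m s"
    by (rule mat_mult_left_right_inverse[OF _ _ gauss_YP[OF s]]) (simp_all add: Y_mat_def P_mat_def)
  then have "(P_mat (gnode s) s s * Y_mat (gnode s) s s) $$ (j, l) = (if j = l then 1 else 0)"
    using j l by simp
  moreover have "(P_mat (gnode s) s s * Y_mat (gnode s) s s) $$ (j, l) =
     (\<Sum>m\<in>{0..<s}. leg_P m (gnode s j) * (leg_P m (gnode s l) * quad_weight (gnode s) s l))"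
    using j l by (simp add: Y_mat_def P_mat_def scalar_prod_def)
  ultimately show ?thesis by (simp add: sum_distrib_right atLeast0LessThan mult.assoc)
qed

lemma lag_expand:
  assumes s: "0 < s" and j: "j < s"
  shows "lagpoly (gnode s) s j =
    (\<Sum>m<s. Polynomial.smult (quad_weight (gnode s) s j * leg_P m (gnode s j)) (legpoly m))"
proof (rule poly_eqI_degree[of "gnode s ` {..<s}"])
  fix t assume "t \<in> gnode s ` {..<s}"
  then obtain l where l: "l < s" "t = gnode s l" by auto
  define S where "S a b = (\<Sum>m<s. leg_P m (gnode s a) * leg_P m (gnode s b))" for a b
  have rhs: "poly (\<Sum>m<s. Polynomial.smult (quad_weight (gnode s) s j * leg_P m (gnode s j)) (legpoly m)) t
      = quad_weight (gnode s) s j * S j l"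
    by (simp add: l poly_sum S_def sum_distrib_left leg_P_poly mult.assoc)
  have lhs: "poly (lagpoly (gnode s) s j) t = (if l = j then 1 else 0)"
    using lagpoly_node[OF gnode_inj j l(1)] l by simp
  show "poly (lagpoly (gnode s) s j) t =
    poly (\<Sum>m<s. Polynomial.smult (quad_weight (gnode s) s j * leg_P m (gnode s j)) (legpoly m)) t"
  proof (cases "l = j")
    case True
    then show ?thesis using gauss_PY[OF s j j] lhs rhs by (simp add: S_def mult.commute)
  next
    case False
    have "S l l * quad_weight (gnode s) s l = 1" using gauss_PY[OF s l(1) l(1)] by (simp add: S_def)
    then have "quad_weight (gnode s) s l \<noteq> 0" by auto
    moreover have "S j l * quad_weight (gnode s) s l = 0" using gauss_PY[OF s j l(1)] False by (simp add: S_def)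
    ultimately have "S j l = 0" by simp
    then show ?thesis using lhs rhs False by simp
  qed
next
  have c: "card (gnode s ` {..<s}) = s" using card_image[OF gnode_inj] by simp
  show "degree (lagpoly (gnode s) s j) < card (gnode s ` {..<s})"
    using degree_lagpoly[OF j, of "gnode s"] c s by linarith
  have "degree (\<Sum>m<s. Polynomial.smult (quad_weight (gnode s) s j * leg_P m (gnode s j)) (legpoly m)) \<le> s - 1"
  proof (rule degree_sum_le)
    fix m assume "m \<in> {..<s}"
    then have "degree (legpoly m) \<le> s - 1" using degree_legpoly[of m] by simp
    then show "degree (Polynomial.smult (quad_weight (gnode s) s j * leg_P m (gnode s j)) (legpoly m)) \<le> s - 1"
      using degree_smult_le order.trans by blast
  qed simp
  then show "degree (\<Sum>m<s. Polynomial.smult (quad_weight (gnode s) s j * leg_P m (gnode s j)) (legpoly m))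
      < card (gnode s ` {..<s})" using c s by linarith
qed

lemma gauss_entry:
  "i < s \<Longrightarrow> j < s \<Longrightarrow> gauss_butcher s $$ (i, j) = poly (pint (lagpoly (gnode s) s j)) (gnode s i)"
  using gnode_in[of i s]
  by (simp add: gauss_butcher_def gnode_fun lagrange_poly integral_poly_pint gnode_def[symmetric])

lemma gauss_is_hbvm:
  assumes s: "0 < s"
  shows "gauss_butcher s = hbvm_matrix (gnode s) s s"
proof (rule eq_matI)
  fix i j assume "i < dim_row (hbvm_matrix (gnode s) s s)" "j < dim_col (hbvm_matrix (gnode s) s s)"
  then have i: "i < s" and j: "j < s" by (simp_all add: hbvm_XY I_mat_def Y_mat_def)
  have "hbvm_matrix (gnode s) s s $$ (i, j) =
    (\<Sum>m\<in>{0..<s}. integral {0..gnode s i} (leg_P m) * (leg_P m (gnode s j) * quad_weight (gnode s) s j))"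
    using i j by (simp add: hbvm_XY I_mat_def Y_mat_def scalar_prod_def)
  also have "\<dots> = (\<Sum>m<s. (quad_weight (gnode s) s j * leg_P m (gnode s j)) * poly (pint (legpoly m)) (gnode s i))"
    using gnode_in[OF i] by (intro sum.cong) (auto simp: leg_P_poly integral_poly_pint)
  also have "\<dots> = poly (pint (lagpoly (gnode s) s j)) (gnode s i)"
    by (simp add: lag_expand[OF s j] pint_sum pint_smult poly_sum)
  finally show "gauss_butcher s $$ (i, j) = hbvm_matrix (gnode s) s s $$ (i, j)"
    using gauss_entry[OF i j] by simp
qed (simp_all add: gauss_butcher_def hbvm_XY I_mat_def Y_mat_def)



lemma gauss_det:
  assumes s: "0 < s"
  shows "det (gauss_butcher s) \<noteq> 0"
proof
  assume "det (gauss_butcher s) = 0"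
  moreover have car: "gauss_butcher s \<in> carrier_mat s s" by (simp add: gauss_butcher_def)
  ultimately obtain v where v: "v \<in> carrier_vec s" "v \<noteq> 0\<^sub>v s" "gauss_butcher s *\<^sub>v v = 0\<^sub>v s"
    using det_0_iff_vec_prod_zero[OF car] by auto
  define p where "p = (\<Sum>j<s. Polynomial.smult (v $ j) (lagpoly (gnode s) s j))"
  have roots: "poly (pint p) (gnode s i) = 0" if i: "i < s" for i
  proof -
    have "0 = (gauss_butcher s *\<^sub>v v) $ i" using v(3) i by simp
    also have "\<dots> = (\<Sum>j\<in>{0..<s}. gauss_butcher s $$ (i, j) * v $ j)"
      using i v(1) car by (simp add: scalar_prod_def)
    also have "\<dots> = (\<Sum>j<s. v $ j * poly (pint (lagpoly (gnode s) s j)) (gnode s i))"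
      using i by (intro sum.cong) (auto simp: gauss_entry mult.commute)
    also have "\<dots> = poly (pint p) (gnode s i)"
      by (simp add: p_def pint_sum pint_smult poly_sum)
    finally show ?thesis by simp
  qed
  have "pint p = 0"
  proof (rule poly_eqI_degree[of "insert 0 (gnode s ` {..<s})"])
    fix t assume "t \<in> insert 0 (gnode s ` {..<s})"
    then show "poly (pint p) t = poly 0 t" using roots by auto
  next
    have "0 \<notin> gnode s ` {..<s}" using gnode_in by fastforce
    then have c: "card (insert 0 (gnode s ` {..<s})) = Suc s"
      using card_image[OF gnode_inj] by simp
    have dp: "degree p \<le> s - 1"
      unfolding p_def
    proof (rule degree_sum_le)
      fix j assume "j \<in> {..<s}"
      then have "degree (lagpoly (gnode s) s j) \<le> s - 1" by (intro degree_lagpoly) simp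
      then show "degree (Polynomial.smult (v $ j) (lagpoly (gnode s) s j)) \<le> s - 1"
        using degree_smult_le order.trans by blast
    qed simp
    show "degree (pint p) < card (insert 0 (gnode s ` {..<s}))"
      using degree_pint[of p] dp c s by linarith
    show "degree (0::real poly) < card (insert 0 (gnode s ` {..<s}))" using c by simp
  qed
  then have p0: "p = 0" using pderiv_pint[of p] by simp
  have "v = 0\<^sub>v s"
  proof (rule eq_vecI)
    fix l assume "l < dim_vec (0\<^sub>v s)"
    then have l: "l < s" by simp
    have "0 = poly p (gnode s l)" using p0 by simp
    also have "\<dots> = (\<Sum>j<s. v $ j * (if l = j then 1 else 0))"
      by (simp add: p_def poly_sum lagpoly_node[OF gnode_inj _ l])
    also have "\<dots> = (\<Sum>j<s. if l = j then v $ j else 0)" by (rule sum.cong) auto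
    also have "\<dots> = v $ l" using l by simp
    finally show "v $ l = 0\<^sub>v s $ l" using l by simp
  qed (use v(1) in simp)
  then show False using v(2) by simp
qed

lemma gauss_no_zero_eig:
  assumes s: "0 < s"
  shows "\<not> eigenvalue (map_mat complex_of_real (gauss_butcher s)) 0"
proof
  let ?G = "map_mat complex_of_real (gauss_butcher s)"
  assume "eigenvalue ?G 0"
  have car: "?G \<in> carrier_mat s s" by (simp add: gauss_butcher_def)
  from \<open>eigenvalue ?G 0\<close> obtain v where v: "v \<in> carrier_vec s" "v \<noteq> 0\<^sub>v s" "?G *\<^sub>v v = 0 \<cdot>\<^sub>v v"
    using car by (auto simp: eigenvalue_def eigenvector_def)
  have "0 \<cdot>\<^sub>v v = 0\<^sub>v s" using v(1) by (intro eq_vecI) auto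
  then have "det ?G = 0" using det_0_iff_vec_prod_zero[OF car] v by auto
  then have "det (gauss_butcher s) = 0" by (simp add: of_real_hom.hom_det)
  then show False using gauss_det[OF s] by simp
qed

theorem theorem1:
  fixes s k :: nat and tau :: "nat \<Rightarrow> real"
  assumes "0 < s" and "s \<le> k"
    and "inj_on tau {..<k}"
    and "\<And>i. i < k \<Longrightarrow> tau i \<in> {0<..1}"
    and "\<And>p :: real poly. degree p \<le> 2 * s - 1 \<Longrightarrow>
           (\<Sum>j<k. quad_weight tau k j * poly p (tau j)) = integral {0..1} (poly p)"
  shows "{z. eigenvalue (map_mat complex_of_real (hbvm_matrix tau k s)) z \<and> z \<noteq> 0}
       = {z. eigenvalue (map_mat complex_of_real (gauss_butcher s)) z}"
proof -
  have pos: "0 \<le> tau i" if "i < k" for i using assms(4)[OF that] by simp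
  have gpos: "0 \<le> gnode s i" if "i < s" for i using gnode_in[OF that] by simp
  have "{z. eigenvalue (map_mat complex_of_real (hbvm_matrix tau k s)) z \<and> z \<noteq> 0}
      = {z. eigenvalue (map_mat complex_of_real (M_mat s)) z \<and> z \<noteq> 0}"
    by (rule hbvm_eigs[OF pos assms(5)])
  also have "\<dots> = {z. eigenvalue (map_mat complex_of_real (hbvm_matrix (gnode s) s s)) z \<and> z \<noteq> 0}"
    by (rule hbvm_eigs[OF gpos gauss_exact[OF assms(1)], symmetric])
  also have "\<dots> = {z. eigenvalue (map_mat complex_of_real (gauss_butcher s)) z \<and> z \<noteq> 0}"
    by (simp add: gauss_is_hbvm[OF assms(1)])
  also have "\<dots> = {z. eigenvalue (map_mat complex_of_real (gauss_butcher s)) z}"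
    using gauss_no_zero_eig[OF assms(1)] by auto
  finally show ?thesis .
qed


end
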